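(* Let $\mathcal H$ be a separable complex Hilbert space, $A\in L(\mathcal H)^+$, $\mathcal S$ a closed subspace, $\mathcal N=\mathcal S\cap N(A)$, and $T\in L(\mathcal H)$ with $R(T)\subseteq\mathcal S$. Then $T$ is an $A$-projection into $\mathcal S$ if and only if $(A,\mathcal S)$ is compatible and $P_{\mathcal S\ominus\mathcal N}T=P_{A,\mathcal S\ominus\mathcal N}$.
   Context: $N(\cdot)$ is the nullspace, $\mathcal S\ominus\mathcal N=\mathcal S\cap\mathcal N^\perp$, $P_{\mathcal M}$ the orthogonal projection onto $\mathcal M$. $(A,\mathcal S)$ is compatible if there exists $Q\in L(\mathcal H)$ with $Q^2=Q$, $R(Q)=\mathcal S$, $AQ=Q^*A$. When $(A,\mathcal S)$ is compatible, $\mathcal H=(\mathcal S\ominus\mathcal N)\dotplus A(\mathcal S)^\perp$ and $P_{A,\mathcal S\ominus\mathcal N}$ denotes the (bounded) oblique projection with range $\mathcal S\ominus\mathcal N$ and nullspace $A(\mathcal S)^\perp$. With $\|z\|_A=\langle Az,z\rangle^{1/2}$, $T$ is an $A$-projection into $\mathcal S$ if $R(T)\subseteq\mathcal S$ and $\|y-Ty\|_A\le\|y-s\|_A$ for all $y\in\mathcal H$, $s\in\mathcal S$. *)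

theory Defs
  imports "HOL-Analysis.Analysis"
begin

text \<open>Complex Hilbert spaces: a Banach space (over the reals, as in the library)
carrying a compatible complex scalar multiplication and a complex inner product,
linear in the first argument and conjugate-linear in the second,
which induces the norm.\<close>

class chilbert_space = banach +
  fixes scaleC :: "complex \<Rightarrow> 'a \<Rightarrow> 'a"
    and cinner :: "'a \<Rightarrow> 'a \<Rightarrow> complex"
  assumes scaleC_add_right: "scaleC a (x + y) = scaleC a x + scaleC a y"
    and scaleC_add_left: "scaleC (a + b) x = scaleC a x + scaleC b x"
    and scaleC_scaleC: "scaleC a (scaleC b x) = scaleC (a * b) x"
    and scaleC_one: "scaleC 1 x = x"
    and scaleR_scaleC: "scaleR r x = scaleC (complex_of_real r) x"
    and cinner_add_left: "cinner (x + y) z = cinner x z + cinner y z"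
    and cinner_scaleC_left: "cinner (scaleC a x) y = a * cinner x y"
    and cinner_commute: "cinner y x = cnj (cinner x y)"
    and cinner_self_norm: "cinner x x = complex_of_real ((norm x)\<^sup>2)"

definition bounded_clinear :: "('a::chilbert_space \<Rightarrow> 'a) \<Rightarrow> bool" where
  "bounded_clinear T \<longleftrightarrow>
     (\<forall>x y. T (x + y) = T x + T y) \<and> (\<forall>c x. T (scaleC c x) = scaleC c (T x)) \<and>
     (\<exists>K. \<forall>x. norm (T x) \<le> norm x * K)"

definition positive_op :: "('a::chilbert_space \<Rightarrow> 'a) \<Rightarrow> bool" where
  "positive_op A \<longleftrightarrow> bounded_clinear A \<and>
     (\<forall>x. Im (cinner (A x) x) = 0 \<and> Re (cinner (A x) x) \<ge> 0)"

definition is_adjoint :: "('a::chilbert_space \<Rightarrow> 'a) \<Rightarrow> ('a \<Rightarrow> 'a) \<Rightarrow> bool" where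
  "is_adjoint Q Qs \<longleftrightarrow> (\<forall>x y. cinner (Q x) y = cinner x (Qs y))"

definition closed_csubspace :: "'a::chilbert_space set \<Rightarrow> bool" where
  "closed_csubspace S \<longleftrightarrow> 0 \<in> S \<and> (\<forall>x\<in>S. \<forall>y\<in>S. x + y \<in> S) \<and>
     (\<forall>c. \<forall>x\<in>S. scaleC c x \<in> S) \<and> closed S"

definition separable_space :: "'a::chilbert_space itself \<Rightarrow> bool" where
  "separable_space _ \<longleftrightarrow> (\<exists>D::'a set. countable D \<and> closure D = UNIV)"

definition nullspace :: "('a::chilbert_space \<Rightarrow> 'a) \<Rightarrow> 'a set" where
  "nullspace A = {x. A x = 0}"

definition orth :: "'a::chilbert_space set \<Rightarrow> 'a set" where
  "orth M = {x. \<forall>y\<in>M. cinner x y = 0}"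

definition odiff :: "'a::chilbert_space set \<Rightarrow> 'a set \<Rightarrow> 'a set" where
  "odiff S N = S \<inter> orth N"

definition orth_proj :: "'a::chilbert_space set \<Rightarrow> 'a \<Rightarrow> 'a" where
  "orth_proj M x = (THE p. p \<in> M \<and> x - p \<in> orth M)"

text \<open>Oblique projection with range M and nullspace K (for H = M direct-sum K).\<close>
definition oblique_proj :: "'a::chilbert_space set \<Rightarrow> 'a set \<Rightarrow> 'a \<Rightarrow> 'a" where
  "oblique_proj M K x = (THE m. m \<in> M \<and> x - m \<in> K)"

definition compatible :: "('a::chilbert_space \<Rightarrow> 'a) \<Rightarrow> 'a set \<Rightarrow> bool" where
  "compatible A S \<longleftrightarrow> (\<exists>Q Qs. bounded_clinear Q \<and> is_adjoint Q Qs \<and> Q \<circ> Q = Q \<and>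
       range Q = S \<and> A \<circ> Q = Qs \<circ> A)"

definition normA :: "('a::chilbert_space \<Rightarrow> 'a) \<Rightarrow> 'a \<Rightarrow> real" where
  "normA A z = sqrt (Re (cinner (A z) z))"

definition is_A_projection :: "('a::chilbert_space \<Rightarrow> 'a) \<Rightarrow> 'a set \<Rightarrow> ('a \<Rightarrow> 'a) \<Rightarrow> bool" where
  "is_A_projection A S T \<longleftrightarrow> range T \<subseteq> S \<and>
     (\<forall>y. \<forall>s\<in>S. normA A (y - T y) \<le> normA A (y - s))"

end

theory Submission
  imports Defs
begin



lemma scaleC_zero_left[simp]: "scaleC 0 (x::'a::chilbert_space) = 0"
  using scaleR_scaleC[of 0 x] by simp

lemma scaleC_minus1: "scaleC (-1) (x::'a::chilbert_space) = - x"
  using scaleR_scaleC[of "-1" x] by simp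

lemma scaleC_zero_right[simp]: "scaleC c (0::'a::chilbert_space) = 0"
proof -
  have "scaleC c (0::'a) = scaleC c 0 + scaleC c 0" using scaleC_add_right[of c "0::'a" 0] by simp
  thus ?thesis by simp
qed

lemma scaleC_minus_right: "scaleC c (- (x::'a::chilbert_space)) = - scaleC c x"
  using scaleC_scaleC[of c "-1" x] scaleC_scaleC[of "-1" c x] by (simp add: scaleC_minus1)

lemma scaleC_minus_left: "scaleC (- c) (x::'a::chilbert_space) = - scaleC c x"
  using scaleC_scaleC[of "-1" c x] by (simp add: scaleC_minus1)

lemma scaleC_diff_right: "scaleC c (x - (y::'a::chilbert_space)) = scaleC c x - scaleC c y"
  using scaleC_add_right[of c x "-y"] by (simp add: scaleC_minus_right)

lemma scaleC_diff_left: "scaleC (a - b) (x::'a::chilbert_space) = scaleC a x - scaleC b x"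
  using scaleC_add_left[of a "-b" x] by (simp add: scaleC_minus_left)

lemma cinner_zero_left[simp]: "cinner 0 (y::'a::chilbert_space) = 0"
proof -
  have "cinner (0::'a) y = cinner 0 y + cinner 0 y" using cinner_add_left[of "0::'a" 0 y] by simp
  thus ?thesis by simp
qed

lemma cinner_zero_right[simp]: "cinner (y::'a::chilbert_space) 0 = 0"
  using cinner_commute[of 0 y] by simp

lemma cinner_add_right: "cinner (x::'a::chilbert_space) (y + z) = cinner x y + cinner x z"
  using cinner_commute[of x "y+z"] cinner_commute[of x y] cinner_commute[of x z] by (simp add: cinner_add_left)

lemma cinner_scaleC_right: "cinner (x::'a::chilbert_space) (scaleC c y) = cnj c * cinner x y"
  using cinner_commute[of x "scaleC c y"] cinner_commute[of x y] by (simp add: cinner_scaleC_left)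

lemma cinner_minus_left: "cinner (- x) (y::'a::chilbert_space) = - cinner x y"
  using cinner_scaleC_left[of "-1" x y] by (simp add: scaleC_minus1)

lemma cinner_minus_right: "cinner (y::'a::chilbert_space) (- x) = - cinner y x"
  using cinner_commute[of y "-x"] cinner_commute[of y x] by (simp add: cinner_minus_left)

lemma cinner_diff_left: "cinner (x - y) (z::'a::chilbert_space) = cinner x z - cinner y z"
  using cinner_add_left[of x "-y" z] by (simp add: cinner_minus_left)

lemma cinner_diff_right: "cinner (z::'a::chilbert_space) (x - y) = cinner z x - cinner z y"
  using cinner_add_right[of z x "-y"] by (simp add: cinner_minus_right)

lemma cinner_scaleR_left: "cinner (scaleR r x) (y::'a::chilbert_space) = scaleR r (cinner x y)"
  by (simp add: cinner_scaleC_left scaleR_conv_of_real scaleR_scaleC)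

lemma norm_sq_cinner: "(norm (x::'a::chilbert_space))^2 = Re (cinner x x)"
  by (simp add: cinner_self_norm)

lemma cinner_self_zero: "cinner x x = 0 \<longleftrightarrow> (x::'a::chilbert_space) = 0"
  by (simp add: cinner_self_norm)

lemma norm_scaleC: "norm (scaleC a (x::'a::chilbert_space)) = cmod a * norm x"
proof -
  have "(norm (scaleC a x))^2 = Re (a * cnj a * cinner x x)"
    by (simp add: norm_sq_cinner cinner_scaleC_left cinner_scaleC_right mult.assoc mult.left_commute)
  also have "\<dots> = (cmod a * norm x)^2"
    by (simp add: cinner_self_norm flip: complex_norm_square power_mult_distrib)
  finally show ?thesis by (simp add: power2_eq_iff_nonneg)
qed

lemma pythag: assumes "cinner u v = 0"
  shows "(norm (u + (v::'a::chilbert_space)))^2 = (norm u)^2 + (norm v)^2"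
proof -
  have "cinner v u = 0" using assms cinner_commute[of v u] by simp
  thus ?thesis using assms by (simp add: norm_sq_cinner cinner_add_left cinner_add_right)
qed

lemma cauchy_schwarz: "cmod (cinner x y) \<le> norm (x::'a::chilbert_space) * norm y"
proof (cases "y = 0")
  case True thus ?thesis by simp
next
  case False
  define c where "c = cinner x y"
  define p where "p = scaleC (c / cinner y y) y"
  have yy: "cinner y y \<noteq> 0" using False cinner_self_zero by blast
  have "cinner (x - p) p = cnj (c / cinner y y) * (c - c / cinner y y * cinner y y)"
    by (simp add: p_def c_def cinner_diff_left cinner_scaleC_right cinner_scaleC_left algebra_simps)
  hence o: "cinner (x - p) p = 0" using yy by simp
  have "(norm x)^2 = (norm (x - p))^2 + (norm p)^2" using pythag[OF o] by simp
  hence "(norm p)^2 \<le> (norm x)^2" by simp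
  hence "norm p \<le> norm x" using power2_le_imp_le norm_ge_zero by blast
  moreover have "norm p = cmod c / norm y"
  proof -
    have "cmod (cinner y y) = (norm y)^2" unfolding cinner_self_norm norm_of_real by simp
    thus ?thesis using False by (simp add: p_def norm_scaleC norm_divide power2_eq_square)
  qed
  ultimately have "cmod c / norm y \<le> norm x" by simp
  moreover have ny: "0 < norm y" using False by simp
  ultimately show ?thesis by (simp add: c_def pos_divide_le_eq)
qed



lemma bl_cinner_left: "bounded_linear (\<lambda>x. cinner (x::'a::chilbert_space) y)"
  by (rule bounded_linear_intro[where K="norm y"])
     (simp_all add: cinner_add_left cinner_scaleR_left cauchy_schwarz)

lemma bounded_clinear_iff: "bounded_clinear (T::'a::chilbert_space \<Rightarrow> 'a) \<longleftrightarrow>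
   bounded_linear T \<and> (\<forall>c x. T (scaleC c x) = scaleC c (T x))"
proof
  assume a: "bounded_clinear T"
  then obtain K where K: "\<forall>x. norm (T x) \<le> norm x * K" unfolding bounded_clinear_def by blast
  have "bounded_linear T"
    by (rule bounded_linear_intro[where K=K]) (use a K in \<open>auto simp: bounded_clinear_def scaleR_scaleC\<close>)
  thus "bounded_linear T \<and> (\<forall>c x. T (scaleC c x) = scaleC c (T x))" using a
    unfolding bounded_clinear_def by blast
next
  assume a: "bounded_linear T \<and> (\<forall>c x. T (scaleC c x) = scaleC c (T x))"
  hence "\<exists>K. \<forall>x. norm (T x) \<le> norm x * K" using bounded_linear.bounded by blast
  thus "bounded_clinear T" using a unfolding bounded_clinear_def
    by (simp add: bounded_linear.axioms(1) linear_add)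
qed

lemma bcl_add: "bounded_clinear T \<Longrightarrow> T (x + y) = T x + T y"
  unfolding bounded_clinear_def by blast
lemma bcl_scale: "bounded_clinear T \<Longrightarrow> T (scaleC c x) = scaleC c (T x)"
  unfolding bounded_clinear_def by blast
lemma bcl_bl: "bounded_clinear T \<Longrightarrow> bounded_linear T"
  using bounded_clinear_iff by blast
lemma bcl_diff: "bounded_clinear T \<Longrightarrow> T (x - y) = T x - T y"
  using bcl_bl linear_diff bounded_linear.axioms(1) by blast
lemma bcl_zero: "bounded_clinear T \<Longrightarrow> T 0 = 0"
  using bcl_bl linear_0 bounded_linear.axioms(1) by blast

lemma csub_zero: "closed_csubspace S \<Longrightarrow> 0 \<in> S" unfolding closed_csubspace_def by blast
lemma csub_add: "closed_csubspace S \<Longrightarrow> x \<in> S \<Longrightarrow> y \<in> S \<Longrightarrow> x + y \<in> S"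
  unfolding closed_csubspace_def by blast
lemma csub_scale: "closed_csubspace S \<Longrightarrow> x \<in> S \<Longrightarrow> scaleC c x \<in> S"
  unfolding closed_csubspace_def by blast
lemma csub_closed: "closed_csubspace S \<Longrightarrow> closed S"
  unfolding closed_csubspace_def by blast
lemma csub_minus: "closed_csubspace S \<Longrightarrow> x \<in> S \<Longrightarrow> - x \<in> S"
  using csub_scale[of S x "-1"] by (simp add: scaleC_minus1)
lemma csub_diff: "closed_csubspace S \<Longrightarrow> x \<in> S \<Longrightarrow> y \<in> S \<Longrightarrow> x - y \<in> S"
  using csub_add[of S x "-y"] csub_minus[of S y] by simp
lemma csub_scaleR: "closed_csubspace S \<Longrightarrow> x \<in> S \<Longrightarrow> scaleR r x \<in> S"
  by (simp add: csub_scale scaleR_scaleC)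

lemma csub_Int: "closed_csubspace S \<Longrightarrow> closed_csubspace T \<Longrightarrow> closed_csubspace (S \<inter> T)"
  unfolding closed_csubspace_def by (simp add: closed_Int)

lemma closed_kernel: "bounded_linear f \<Longrightarrow> closed {x. f x = 0}"
  by (rule closed_Collect_eq) (simp_all add: linear_continuous_on continuous_on_const)

lemma csub_orth: "closed_csubspace (orth (M::'a::chilbert_space set))"
proof -
  have "orth M = (\<Inter>y\<in>M. {x. cinner x y = 0})" unfolding orth_def by auto
  moreover have "closed (\<Inter>y\<in>M. {x. cinner x y = (0::complex)})"
    using closed_kernel[OF bl_cinner_left] by blast
  ultimately show ?thesis unfolding closed_csubspace_def orth_def
    by (auto simp: cinner_add_left cinner_scaleC_left)
qed

lemma csub_null: "bounded_clinear A \<Longrightarrow> closed_csubspace (nullspace A)"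
  unfolding closed_csubspace_def nullspace_def
  using closed_kernel[OF bcl_bl] by (auto simp: bcl_add bcl_scale bcl_zero)

lemma orth_sym: "x \<in> orth M \<Longrightarrow> y \<in> M \<Longrightarrow> cinner y x = 0"
  unfolding orth_def using cinner_commute[of y x] by force

lemma herm:
  assumes "positive_op A"
  shows "cinner (A x) y = cinner x (A (y::'a::chilbert_space))"
proof -
  have bcl: "bounded_clinear A" using assms positive_op_def by blast
  have z: "cinner (A z) z = cinner z (A z)" for z
  proof -
    have "Im (cinner (A z) z) = 0" using assms positive_op_def by blast
    thus ?thesis using cinner_commute[of z "A z"] by (simp add: complex_eq_iff)
  qed
  define a where "a = cinner (A x) y"
  define b where "b = cinner (A y) x"
  define c where "c = cinner x (A y)"
  define d where "d = cinner y (A x)"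
  have e1: "a + b = c + d"
    using z[of "x + y"] z[of x] z[of y]
    by (simp add: bcl_add[OF bcl] cinner_add_left cinner_add_right a_def b_def c_def d_def algebra_simps)
  have e2: "- (\<i> * a) + \<i> * b = - (\<i> * c) + \<i> * d"
    using z[of "x + scaleC \<i> y"] z[of x] z[of y]
    by (simp add: bcl_add[OF bcl] bcl_scale[OF bcl] cinner_add_left cinner_add_right
        cinner_scaleC_left cinner_scaleC_right a_def b_def c_def d_def algebra_simps)
  have "\<i> * (b - a) = \<i> * (d - c)" using e2 by (simp add: algebra_simps)
  hence e3: "b - a = d - c" by simp
  have "(a + b) - (b - a) = (c + d) - (d - c)" using e1 e3 by simp
  hence "a = c" by simp
  thus ?thesis by (simp add: a_def c_def)
qed

lemma positive_id: "positive_op (id :: 'a::chilbert_space \<Rightarrow> 'a)"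
  unfolding positive_op_def bounded_clinear_def
  by (auto simp: cinner_self_norm intro: exI[where x=1])

lemma var:
  assumes pos: "positive_op A"
    and le: "\<And>t. Re (cinner (A e) e) \<le> Re (cinner (A (e - scaleC t s)) (e - scaleC t (s::'a::chilbert_space)))"
  shows "cinner (A e) s = 0"
proof -
  have bcl: "bounded_clinear A" using pos positive_op_def by blast
  define c where "c = cinner (A e) s"
  define q where "q = Re (cinner (A s) s)"
  have q0: "q \<ge> 0" using pos positive_op_def q_def by blast
  have qq: "cinner (A s) s = of_real q"
    using pos unfolding positive_op_def q_def by (simp add: complex_eq_iff)
  have cs: "cinner (A s) e = cnj c"
    using herm[OF pos, of s e] cinner_commute[of e "A s"] c_def herm[OF pos, of e s] by simp
  have exp: "cinner (A (e - scaleC t s)) (e - scaleC t s) =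
      cinner (A e) e - cnj t * c - t * cnj c + t * cnj t * of_real q" for t
    by (simp add: bcl_diff[OF bcl] bcl_scale[OF bcl] cinner_diff_left cinner_diff_right
        cinner_scaleC_left cinner_scaleC_right c_def[symmetric] cs qq algebra_simps)
  define k where "k = (cmod c)^2"
  define \<sigma> where "\<sigma> = 1 / (q + 1)"
  have sp: "\<sigma> > 0" using q0 by (simp add: \<sigma>_def)
  have cc: "c * cnj c = of_real k" unfolding k_def by (rule complex_norm_square[symmetric])
  have "cinner (A (e - scaleC (of_real \<sigma> * c) s)) (e - scaleC (of_real \<sigma> * c) s)
        = cinner (A e) e + of_real (\<sigma> * \<sigma> * k * q - 2 * \<sigma> * k)"
  proof -
    have "cinner (A (e - scaleC (of_real \<sigma> * c) s)) (e - scaleC (of_real \<sigma> * c) s)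
      = cinner (A e) e - of_real \<sigma> * (c * cnj c) - of_real \<sigma> * (c * cnj c)
         + of_real \<sigma> * of_real \<sigma> * (c * cnj c) * of_real q"
      unfolding exp by (simp add: algebra_simps)
    thus ?thesis unfolding cc by (simp add: algebra_simps)
  qed
  hence "0 \<le> \<sigma> * \<sigma> * k * q - 2 * \<sigma> * k" using le[of "of_real \<sigma> * c"] by simp
  hence "0 \<le> \<sigma> * k * (\<sigma> * q - 2)" by (simp add: algebra_simps)
  moreover have "\<sigma> * q < 2" using q0 by (simp add: \<sigma>_def field_simps)
  moreover have "k \<ge> 0" by (simp add: k_def)
  ultimately have "k = 0" using sp
    by (smt (verit, best) mult_pos_neg mult_pos_pos)
  thus ?thesis by (simp add: k_def c_def)
qed

lemma parallelogram:
  "(norm (u + v))^2 + (norm (u - v))^2 = 2 * (norm u)^2 + 2 * (norm (v::'a::chilbert_space))^2"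
  by (simp add: norm_sq_cinner cinner_add_left cinner_add_right cinner_diff_left cinner_diff_right)



lemma aux_ineq: "(a::real) < d + i \<Longrightarrow> b < d + j \<Longrightarrow> 2*a+2*b-4*d < 2*(d+i)+2*(d+j)-4*d"
  by (simp add: algebra_simps)

lemma proj_min:
  assumes M: "closed_csubspace M"
  shows "\<exists>p\<in>M. \<forall>m\<in>M. (norm (x - p))^2 \<le> (norm (x - m::'a::chilbert_space))^2"
proof -
  define D where "D = (\<lambda>m. (norm (x - m))^2) ` M"
  define d where "d = Inf D"
  have ne: "D \<noteq> {}" using csub_zero[OF M] D_def by blast
  have bb: "bdd_below D" unfolding D_def by (rule bdd_belowI[where m=0]) auto
  have low: "d \<le> (norm (x - m))^2" if "m \<in> M" for m
    unfolding d_def using cInf_lower[OF _ bb] that D_def by blast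
  have "\<exists>m\<in>M. (norm (x - m))^2 < d + inverse (real (Suc n))" for n
  proof -
    have "Inf D < d + inverse (real (Suc n))" by (simp add: d_def)
    then obtain y where "y \<in> D" "y < d + inverse (real (Suc n))"
      using cInf_less_iff[OF ne bb] by blast
    thus ?thesis unfolding D_def by blast
  qed
  then obtain f where f: "\<And>n. f n \<in> M" "\<And>n. (norm (x - f n))^2 < d + inverse (real (Suc n))"
    by metis
  have par: "(norm (a - b))^2 \<le> 2 * (norm (x - a))^2 + 2 * (norm (x - b))^2 - 4 * d"
    if a: "a \<in> M" and b: "b \<in> M" for a b
  proof -
    define c where "c = scaleR (1/2) (a + b)"
    have cM: "c \<in> M" unfolding c_def by (rule csub_scaleR[OF M csub_add[OF M a b]])
    have "(x - a) + (x - b) = scaleR 2 (x - c)"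
      by (simp add: c_def scaleR_right_diff_distrib algebra_simps scaleR_2)
    hence "(norm ((x - a) + (x - b)))^2 = 4 * (norm (x - c))^2"
      by (simp add: power2_eq_square)
    moreover have "(x - a) - (x - b) = b - a" by simp
    ultimately have "4 * (norm (x - c))^2 + (norm (a - b))^2
        = 2 * (norm (x - a))^2 + 2 * (norm (x - b))^2"
      using parallelogram[of "x - a" "x - b"] by (simp add: norm_minus_commute)
    thus ?thesis using low[OF cM] by (smt (verit))
  qed
  have cau: "Cauchy f"
  proof (rule CauchyI)
    fix e :: real assume e: "0 < e"
    obtain N where N: "inverse (real (Suc N)) < e^2 / 4"
      using reals_Archimedean[of "e^2/4"] e by auto
    have "norm (f m - f n) < e" if "m \<ge> N" "n \<ge> N" for m n
    proof -
      have im: "inverse (real (Suc m)) \<le> inverse (real (Suc N))" using that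
        by (simp add: le_imp_inverse_le)
      have inn: "inverse (real (Suc n)) \<le> inverse (real (Suc N))" using that
        by (simp add: le_imp_inverse_le)
      have "(norm (f m - f n))^2 \<le> 2 * (norm (x - f m))^2 + 2 * (norm (x - f n))^2 - 4 * d"
        using par f by blast
      also have "\<dots> < 2 * (d + inverse (real (Suc m))) + 2 * (d + inverse (real (Suc n))) - 4 * d"
        by (rule aux_ineq[OF f(2)[of m] f(2)[of n]])
      also have "\<dots> \<le> 4 * inverse (real (Suc N))" using im inn by (smt (verit))
      also have "\<dots> < e^2" using N by (simp add: field_simps)
      finally show ?thesis using e by (simp add: power_less_imp_less_base)
    qed
    thus "\<exists>M. \<forall>m\<ge>M. \<forall>n\<ge>M. norm (f m - f n) < e" by blast
  qed
  then obtain p where p: "f \<longlonglongrightarrow> p" using Cauchy_convergent_iff convergent_def by blast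
  have pM: "p \<in> M" using closed_sequentially[OF csub_closed[OF M] f(1) p] .
  have "(norm (x - p))^2 \<le> d"
  proof (rule LIMSEQ_le)
    show "(\<lambda>n. (norm (x - f n))^2) \<longlonglongrightarrow> (norm (x - p))^2"
      by (intro tendsto_intros p)
    show "(\<lambda>n. d + inverse (real (Suc n))) \<longlonglongrightarrow> d"
      using tendsto_add[OF tendsto_const LIMSEQ_inverse_real_of_nat, of d] by simp
    show "\<exists>N. \<forall>n\<ge>N. (norm (x - f n))^2 \<le> d + inverse (real (Suc n))"
      using f(2) less_imp_le by blast
  qed
  thus ?thesis using pM low by (meson order_trans)
qed

lemma proj_exists:
  assumes M: "closed_csubspace M"
  shows "\<exists>p\<in>M. x - p \<in> orth (M::'a::chilbert_space set)"
proof -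
  obtain p where pM: "p \<in> M" and mn: "\<And>m. m \<in> M \<Longrightarrow> (norm (x - p))^2 \<le> (norm (x - m))^2"
    using proj_min[OF M, of x] by blast
  have "cinner (x - p) s = 0" if s: "s \<in> M" for s
  proof -
    have "cinner (id (x - p)) s = 0"
    proof (rule var[OF positive_id])
      fix t
      have "p + scaleC t s \<in> M" using csub_add[OF M pM csub_scale[OF M s]] .
      from mn[OF this] have "(norm (x - p))^2 \<le> (norm ((x - p) - scaleC t s))^2"
        by (simp add: algebra_simps)
      thus "Re (cinner (id (x - p)) (x - p)) \<le> Re (cinner (id (x - p - scaleC t s)) (x - p - scaleC t s))"
        by (simp add: norm_sq_cinner)
    qed
    thus ?thesis by simp
  qed
  thus ?thesis using pM unfolding orth_def by blast
qed

lemma proj_unique: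
  assumes M: "closed_csubspace M" and "p \<in> M" "x - p \<in> orth M" "q \<in> M" "x - q \<in> orth M"
  shows "p = (q::'a::chilbert_space)"
proof -
  have "p - q \<in> M" using csub_diff[OF M assms(2) assms(4)] .
  moreover have "(x - q) - (x - p) \<in> orth M" using csub_diff[OF csub_orth assms(5) assms(3)] .
  moreover have "(x - q) - (x - p) = p - q" by simp
  ultimately have pq: "p - q \<in> M" "p - q \<in> orth M" by simp_all
  have "cinner (p - q) (p - q) = 0" using pq(2) pq(1) unfolding orth_def by blast
  hence "p - q = 0" by (simp only: cinner_self_zero)
  thus ?thesis by simp
qed

lemma orth_proj_eq:
  assumes M: "closed_csubspace M" and "p \<in> M" "x - p \<in> orth M"
  shows "orth_proj M x = (p::'a::chilbert_space)"
  unfolding orth_proj_def by (rule the_equality) (use assms proj_unique in blast)+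

lemma orth_proj:
  assumes M: "closed_csubspace M"
  shows "orth_proj M x \<in> M" "x - orth_proj M x \<in> orth (M::'a::chilbert_space set)"
  using proj_exists[OF M, of x] orth_proj_eq[OF M] by auto

lemma orth_proj_bcl:
  assumes M: "closed_csubspace M"
  shows "bounded_clinear (orth_proj (M::'a::chilbert_space set))"
proof -
  note P = orth_proj[OF M]
  have add: "orth_proj M (x + y) = orth_proj M x + orth_proj M y" for x y
  proof (rule orth_proj_eq[OF M])
    show "orth_proj M x + orth_proj M y \<in> M" by (rule csub_add[OF M P(1) P(1)])
    have e: "x + y - (orth_proj M x + orth_proj M y) = (x - orth_proj M x) + (y - orth_proj M y)" by simp
    show "x + y - (orth_proj M x + orth_proj M y) \<in> orth M"
      unfolding e by (rule csub_add[OF csub_orth P(2) P(2)])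
  qed
  have sc: "orth_proj M (scaleC c x) = scaleC c (orth_proj M x)" for c x
  proof (rule orth_proj_eq[OF M])
    show "scaleC c (orth_proj M x) \<in> M" by (rule csub_scale[OF M P(1)])
    have e: "scaleC c x - scaleC c (orth_proj M x) = scaleC c (x - orth_proj M x)"
      by (simp add: scaleC_diff_right)
    show "scaleC c x - scaleC c (orth_proj M x) \<in> orth M"
      unfolding e by (rule csub_scale[OF csub_orth P(2)])
  qed
  have bd: "norm (orth_proj M x) \<le> norm x * 1" for x
  proof -
    have "cinner (orth_proj M x) (x - orth_proj M x) = 0" by (rule orth_sym[OF P(2) P(1)])
    from pythag[OF this] have "(norm x)^2 = (norm (orth_proj M x))^2 + (norm (x - orth_proj M x))^2"
      by simp
    hence "(norm (orth_proj M x))^2 \<le> (norm x)^2" by simp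
    thus ?thesis using power2_le_imp_le by simp
  qed
  show ?thesis unfolding bounded_clinear_def using add sc bd by blast
qed

lemma riesz:
  assumes Q: "bounded_clinear (Q::'a::chilbert_space \<Rightarrow> 'a)"
  shows "\<exists>z. \<forall>x. cinner (Q x) y = cinner x z"
proof -
  define f where "f x = cinner (Q x) y" for x
  have fadd: "f (u + v) = f u + f v" for u v by (simp add: f_def bcl_add[OF Q] cinner_add_left)
  have fsc: "f (scaleC c u) = c * f u" for c u by (simp add: f_def bcl_scale[OF Q] cinner_scaleC_left)
  have fdiff: "f (u - v) = f u - f v" for u v by (simp add: f_def bcl_diff[OF Q] cinner_diff_left)
  have f0: "f 0 = 0" by (simp add: f_def bcl_zero[OF Q])
  define K where "K = {x. f x = 0}"
  have bl: "bounded_linear f" unfolding f_def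
    using bounded_linear_compose[OF bl_cinner_left bcl_bl[OF Q]] by (simp add: o_def)
  have Kc: "closed_csubspace K"
    unfolding closed_csubspace_def K_def
    using closed_kernel[OF bl] by (auto simp: fadd fsc f0)
  show ?thesis
  proof (cases "\<forall>x. f x = 0")
    case True thus ?thesis by (intro exI[where x=0]) (simp add: f_def)
  next
    case False
    then obtain x0 where x0: "f x0 \<noteq> 0" by blast
    define w where "w = x0 - orth_proj K x0"
    have wK: "w \<in> orth K" using orth_proj(2)[OF Kc] w_def by simp
    have fw: "f w = f x0" using orth_proj(1)[OF Kc, of x0] by (simp add: w_def fdiff K_def)
    have wz: "w \<noteq> 0" using fw x0 by (auto simp: f_def bcl_zero[OF Q])
    have ww: "cinner w w \<noteq> 0" using wz cinner_self_zero by blast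
    have "f x = cinner x (scaleC (cnj (f w / cinner w w)) w)" for x
    proof -
      define u where "u = scaleC (f x) w - scaleC (f w) x"
      have "f u = 0" by (simp add: u_def fdiff fsc)
      hence "cinner u w = 0" using wK unfolding K_def orth_def
        using orth_sym[OF wK] by (simp add: K_def)
      hence "f x * cinner w w = f w * cinner x w"
        by (simp add: u_def cinner_diff_left cinner_scaleC_left)
      hence "f x = f w * cinner x w / cinner w w" using ww by (simp add: field_simps)
      thus ?thesis by (simp add: cinner_scaleC_right)
    qed
    thus ?thesis unfolding f_def by blast
  qed
qed



lemma posnull:
  assumes pos: "positive_op A" and z: "cinner (A x) x = 0"
  shows "A x = (0::'a::chilbert_space)"
proof -
  have "cinner (A x) s = 0" for s
  proof (rule var[OF pos])
    fix t
    show "Re (cinner (A x) x) \<le> Re (cinner (A (x - scaleC t s)) (x - scaleC t s))"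
      using z pos unfolding positive_op_def by simp
  qed
  from this[of "A x"] show ?thesis by (simp only: cinner_self_zero)
qed

theorem mainTheorem7:
  fixes A T :: "'a::chilbert_space \<Rightarrow> 'a" and S :: "'a set"
  assumes "separable_space TYPE('a)"
    and "positive_op A"
    and "closed_csubspace S"
    and "bounded_clinear T"
    and "range T \<subseteq> S"
  shows "is_A_projection A S T \<longleftrightarrow>
    (compatible A S \<and>
     orth_proj (odiff S (S \<inter> nullspace A)) \<circ> T =
       oblique_proj (odiff S (S \<inter> nullspace A)) (orth (A ` S)))"
proof -
  note pos = assms(2)
  note Sc = assms(3)
  note bclT = assms(4)
  have bclA: "bounded_clinear A" using pos positive_op_def by blast
  define N where "N = S \<inter> nullspace A"
  define M where "M = odiff S N"
  define K where "K = orth (A ` S)"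
  define P where "P = orth_proj N"
  have Nc: "closed_csubspace N" unfolding N_def by (rule csub_Int[OF Sc csub_null[OF bclA]])
  have Mc: "closed_csubspace M" unfolding M_def odiff_def by (rule csub_Int[OF Sc csub_orth])
  have Kc: "closed_csubspace K" unfolding K_def by (rule csub_orth)
  have TS: "T y \<in> S" for y using assms(5) by blast
  have NS: "n \<in> S" if "n \<in> N" for n using that N_def by blast
  have MS: "m \<in> S" if "m \<in> M" for m using that M_def odiff_def by blast
  have MoN: "m \<in> orth N" if "m \<in> M" for m using that M_def odiff_def by blast
  have inK: "x \<in> K \<longleftrightarrow> (\<forall>s\<in>S. cinner x (A s) = 0)" for x
    unfolding K_def orth_def by blast
  have NK: "n \<in> K" if n: "n \<in> N" for n
  proof -
    have An: "A n = 0" using n unfolding N_def nullspace_def by blast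
    show ?thesis unfolding inK
      using herm[OF pos, of n] An by simp
  qed
  have MK0: "x = 0" if "x \<in> M" "x \<in> K" for x
  proof -
    have "cinner x (A x) = 0" using that inK MS by blast
    hence "cinner (A x) x = 0" using herm[OF pos, of x x] by simp
    hence "A x = 0" by (rule posnull[OF pos])
    hence "x \<in> N" using MS[OF that(1)] unfolding N_def nullspace_def by blast
    hence "cinner x x = 0" using MoN[OF that(1)] unfolding orth_def by blast
    thus ?thesis by (simp only: cinner_self_zero)
  qed
  have KL: "oblique_proj M K y = m" if m: "m \<in> M" and k: "k \<in> K" and y: "y = m + k" for y m k
    unfolding oblique_proj_def
  proof (rule the_equality)
    show "m \<in> M \<and> y - m \<in> K" using m k y by simp
    fix m' assume a: "m' \<in> M \<and> y - m' \<in> K"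
    have "m' - m \<in> M" using csub_diff[OF Mc] a m by blast
    moreover have "(y - m) - (y - m') \<in> K"
    proof -
      have ym: "y - m \<in> K" using k y by simp
      show ?thesis by (rule csub_diff[OF Kc ym]) (use a in blast)
    qed
    moreover have "(y - m) - (y - m') = m' - m" by simp
    ultimately have "m' - m = 0" using MK0 by metis
    thus "m' = m" by simp
  qed
  have PN: "P y \<in> N" "y - P y \<in> orth N" for y unfolding P_def using orth_proj[OF Nc] by auto
  have bclP: "bounded_clinear P" unfolding P_def by (rule orth_proj_bcl[OF Nc])
  have decS: "s - P s \<in> M" if s: "s \<in> S" for s
    unfolding M_def odiff_def using csub_diff[OF Sc s NS[OF PN(1)]] PN(2) by blast
  have PMS: "orth_proj M s = s - P s" if s: "s \<in> S" for s
  proof (rule orth_proj_eq[OF Mc decS[OF s]])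
    have "P s \<in> orth M" unfolding orth_def
      using orth_sym[OF MoN PN(1)] by blast
    thus "s - (s - P s) \<in> orth M" by simp
  qed
  have oblS: "oblique_proj M K y = s - P s" if s: "s \<in> S" and yk: "y - s \<in> K" for y s
  proof (rule KL[OF decS[OF s]])
    show "P s + (y - s) \<in> K" by (rule csub_add[OF Kc NK[OF PN(1)] yk])
    show "y = s - P s + (P s + (y - s))" by simp
  qed
  have key: "orth_proj M \<circ> T = oblique_proj M K" if NE: "\<And>y. y - T y \<in> K"
  proof
    fix y
    show "(orth_proj M \<circ> T) y = oblique_proj M K y"
      using PMS[OF TS] oblS[OF TS NE] by simp
  qed
  have minim: "normA A (y - T y) \<le> normA A (y - s)" if NE: "y - T y \<in> K" and s: "s \<in> S" for y s
  proof -
    define e where "e = y - T y"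
    define w where "w = T y - s"
    have wS: "w \<in> S" unfolding w_def by (rule csub_diff[OF Sc TS s])
    have ew: "cinner (A e) w = 0" using herm[OF pos, of e w] NE wS inK e_def by simp
    have we: "cinner (A w) e = 0" using herm[OF pos, of w e] ew cinner_commute[of w "A e"] by simp
    have ww: "Re (cinner (A w) w) \<ge> 0" using pos positive_op_def by blast
    have "y - s = e + w" by (simp add: e_def w_def)
    hence "Re (cinner (A (y - s)) (y - s)) = Re (cinner (A e) e) + Re (cinner (A w) w)"
      using ew we by (simp add: bcl_add[OF bclA] cinner_add_left cinner_add_right)
    hence "Re (cinner (A e) e) \<le> Re (cinner (A (y - s)) (y - s))" using ww by simp
    thus ?thesis unfolding normA_def e_def by simp
  qed
  show ?thesis
    unfolding N_def[symmetric] M_def[symmetric] K_def[symmetric]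
  proof
    assume AP: "is_A_projection A S T"
    have NE: "y - T y \<in> K" for y
    proof -
      define e where "e = y - T y"
      have "cinner (A e) s = 0" if s: "s \<in> S" for s
      proof (rule var[OF pos])
        fix t
        have "T y + scaleC t s \<in> S" by (rule csub_add[OF Sc TS csub_scale[OF Sc s]])
        hence "normA A (y - T y) \<le> normA A (y - (T y + scaleC t s))"
          using AP unfolding is_A_projection_def by blast
        moreover have "y - (T y + scaleC t s) = e - scaleC t s" by (simp add: e_def)
        ultimately show "Re (cinner (A e) e) \<le> Re (cinner (A (e - scaleC t s)) (e - scaleC t s))"
          unfolding normA_def e_def by simp
      qed
      hence "cinner e (A s) = 0" if "s \<in> S" for s using that herm[OF pos, of e s] by simp
      thus ?thesis unfolding inK e_def by blast
    qed
    define Q where "Q y = T y - P (T y) + P y" for y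
    have bclQ: "bounded_clinear Q"
    proof -
      have "bounded_linear Q" unfolding Q_def
        by (intro bounded_linear_add bounded_linear_sub bcl_bl[OF bclT]
              bounded_linear_compose[OF bcl_bl[OF bclP] bcl_bl[OF bclT]] bcl_bl[OF bclP])
      moreover have "Q (scaleC c x) = scaleC c (Q x)" for c x
        unfolding Q_def by (simp add: bcl_scale[OF bclT] bcl_scale[OF bclP] scaleC_add_right scaleC_diff_right)
      ultimately show ?thesis using bounded_clinear_iff by blast
    qed
    have QS: "Q y \<in> S" for y unfolding Q_def
      by (rule csub_add[OF Sc csub_diff[OF Sc TS NS[OF PN(1)]] NS[OF PN(1)]])
    have Qid: "Q s = s" if s: "s \<in> S" for s
    proof -
      have "oblique_proj M K s = T s - P (T s)" by (rule oblS[OF TS NE])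
      moreover have "oblique_proj M K s = s - P s" by (rule oblS[OF s]) (simp add: csub_zero[OF Kc])
      ultimately have "T s - P (T s) = s - P s" by simp
      thus ?thesis unfolding Q_def by (metis diff_add_cancel)
    qed
    have QQ: "Q \<circ> Q = Q" using Qid QS by auto
    have rQ: "range Q = S" using Qid QS by (metis image_subsetI subsetI subset_antisym rangeI)
    have xQK: "x - Q x \<in> K" for x
    proof -
      have e: "x - Q x = (x - T x) + P (T x) - P x" unfolding Q_def by (simp add: algebra_simps)
      show ?thesis unfolding e by (rule csub_diff[OF Kc csub_add[OF Kc NE NK[OF PN(1)]] NK[OF PN(1)]])
    qed
    have "\<forall>y. \<exists>z. \<forall>x. cinner (Q x) y = cinner x z" using riesz[OF bclQ] by blast
    then obtain Qs where Qs: "\<And>y x. cinner (Q x) y = cinner x (Qs y)" by metis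
    have adj: "is_adjoint Q Qs" unfolding is_adjoint_def using Qs by blast
    have AQ: "A (Q x) = Qs (A x)" for x
    proof -
      have i1: "cinner (A (Q x)) z = cinner (Qs (A x)) z" for z
      proof -
        have a: "cinner (Qs (A x)) z = cinner x (A (Q z))"
        proof -
          have "cinner (Qs (A x)) z = cnj (cinner z (Qs (A x)))" by (rule cinner_commute)
          also have "\<dots> = cnj (cinner (Q z) (A x))" by (simp only: Qs)
          also have "\<dots> = cinner (A x) (Q z)" by (rule cinner_commute[symmetric])
          also have "\<dots> = cinner x (A (Q z))" by (rule herm[OF pos])
          finally show ?thesis .
        qed
        have b: "cinner x (A (Q z)) = cinner (Q x) (A (Q z))"
        proof -
          have "cinner (x - Q x) (A (Q z)) = 0" using xQK QS inK by blast
          thus ?thesis by (simp add: cinner_diff_left)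
        qed
        have c: "cinner (Q x) (A z) = cinner (Q x) (A (Q z))"
        proof -
          have "cinner (z - Q z) (A (Q x)) = 0" using xQK QS inK by blast
          hence "cinner (A (Q x)) (z - Q z) = 0" using cinner_commute[of "A (Q x)" "z - Q z"] by simp
          hence "cinner (Q x) (A (z - Q z)) = 0" using herm[OF pos, of "Q x" "z - Q z"] by simp
          thus ?thesis by (simp add: bcl_diff[OF bclA] cinner_diff_right)
        qed
        show ?thesis using a b c herm[OF pos, of "Q x" z] by simp
      qed
      have "cinner (A (Q x) - Qs (A x)) (A (Q x) - Qs (A x)) = 0"
        using i1 by (simp add: cinner_diff_left)
      thus ?thesis by (simp only: cinner_self_zero) simp
    qed
    have "compatible A S" unfolding compatible_def
      using bclQ adj QQ rQ AQ by (intro exI[where x=Q] exI[where x=Qs]) auto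
    thus "compatible A S \<and> orth_proj M \<circ> T = oblique_proj M K" using key NE by blast
  next
    assume h: "compatible A S \<and> orth_proj M \<circ> T = oblique_proj M K"
    then obtain Q Qs where bclQ: "bounded_clinear Q" and adj: "is_adjoint Q Qs" and QQ: "Q \<circ> Q = Q"
      and rQ: "range Q = S" and AQ: "A \<circ> Q = Qs \<circ> A"
      unfolding compatible_def by blast
    have QS: "Q y \<in> S" for y using rQ by blast
    have QK: "y - Q y \<in> K" for y
    proof -
      have "cinner (y - Q y) (A s) = 0" if s: "s \<in> S" for s
      proof -
        obtain s' where s': "s = Q s'" using s rQ by blast
        have "cinner (y - Q y) (A s) = cinner (y - Q y) (Qs (A s'))"
          using AQ s' by (metis comp_apply)
        also have "\<dots> = cinner (Q (y - Q y)) (A s')" using adj unfolding is_adjoint_def by simp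
        also have "Q (y - Q y) = 0" using QQ bcl_diff[OF bclQ] by (metis comp_apply diff_self)
        finally show ?thesis by simp
      qed
      thus ?thesis unfolding inK by blast
    qed
    have NE: "y - T y \<in> K" for y
    proof -
      have "oblique_proj M K y = Q y - P (Q y)" by (rule oblS[OF QS QK])
      moreover have "oblique_proj M K y = T y - P (T y)"
        using h PMS[OF TS] by (metis comp_apply)
      ultimately have e: "y - T y = (y - Q y) + P (Q y) - P (T y)" by (simp add: algebra_simps)
      show ?thesis unfolding e by (rule csub_diff[OF Kc csub_add[OF Kc QK NK[OF PN(1)]] NK[OF PN(1)]])
    qed
    show "is_A_projection A S T" unfolding is_A_projection_def
      using assms(5) minim[OF NE] by blast
  qed
qed

end
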